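(* Let $<_t$ be a term order on $\binom{[n]}{2}$ such that $\{a,b\}<_t\{a',b'\}$ whenever $a+b<a'+b'$. Let $G$ be a graph on $[n]$ such that every $3$-subset of $[n]$ contains an edge of $G$. Then the exterior shifting $E(G)^{<_t}$ contains $B(n)=\{\{a,b\}:1\le a<b\le n,\ a+b\le n\}$.
   Context: Partial order on $k$-subsets of $[n]$: for $S=\{s_1<\dots<s_k\}$, $T=\{t_1<\dots<t_k\}$, $S\le T$ iff $s_i\le t_i$ for all $i$. A term order on $\binom{[n]}{k}$ is a linear order extending this partial order. Let $X=(x_{ij})$ be an $n\times n$ matrix of independent indeterminates over $\mathbb{Q}$ and $C_k(X)$ its $k$-th compound matrix (entries $c_{S,T}=\det(x_{ij})_{i\in S,j\in T}$ for $k$-subsets $S,T$). For $\mathcal F\subseteq\binom{[n]}{k}$, the exterior shifting $\mathcal F^{<_t}$ is obtained greedily: go through all $S\in\binom{[n]}{k}$ in increasing $<_t$ order and put $S$ into $\mathcal F^{<_t}$ iff the row of $C_k(X)$ indexed by $S$, restricted to the columns indexed by $\mathcal F$, is linearly independent (over $\mathbb{Q}(x_{ij})$) of the previously selected such rows. Thus $|\mathcal F^{<_t}|=|\mathcal F|$. *)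

theory Defs
  imports Complex_Main "HOL-Library.Poly_Mapping" "HOL-Library.Product_Lexorder"
    "HOL-Computational_Algebra.Fraction_Field" "HOL-Combinatorics.Permutations"
begin

text \<open>Multivariate polynomials over the rationals in the variables x_(i,j),
  as finitely supported maps from monomials (exponent vectors) to coefficients.\<close>
type_synonym mpoly = "((nat \<times> nat) \<Rightarrow>\<^sub>0 nat) \<Rightarrow>\<^sub>0 rat"

type_synonym ratfun = "mpoly fract"

definition var :: "nat \<Rightarrow> nat \<Rightarrow> mpoly" where
  "var i j = Poly_Mapping.single (Poly_Mapping.single (i, j) 1) 1"

definition ksubsets :: "nat \<Rightarrow> nat \<Rightarrow> nat set set" where
  "ksubsets n k = {S. S \<subseteq> {1..n} \<and> card S = k}"

text \<open>i-th smallest element (0-based) of a finite set.\<close>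
definition elem :: "nat set \<Rightarrow> nat \<Rightarrow> nat" where
  "elem S i = sorted_list_of_set S ! i"

definition gale_le :: "nat \<Rightarrow> nat set \<Rightarrow> nat set \<Rightarrow> bool" where
  "gale_le k S T \<longleftrightarrow> (\<forall>i<k. elem S i \<le> elem T i)"

definition term_order :: "nat \<Rightarrow> nat \<Rightarrow> (nat set \<times> nat set) set \<Rightarrow> bool" where
  "term_order n k r \<longleftrightarrow> linear_order_on (ksubsets n k) r \<and> r \<subseteq> ksubsets n k \<times> ksubsets n k \<and>
     (\<forall>S\<in>ksubsets n k. \<forall>T\<in>ksubsets n k. gale_le k S T \<longrightarrow> (S, T) \<in> r)"

text \<open>Entry c_{S,T} of the k-th compound matrix of X = (x_ij): the minor with
  rows S and columns T (Leibniz formula, rows/columns in increasing order).\<close>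
definition compound :: "nat \<Rightarrow> nat set \<Rightarrow> nat set \<Rightarrow> ratfun" where
  "compound k S T = Fract (\<Sum>p | p permutes {..<k}.
      of_int (sign p) * (\<Prod>i<k. var (elem S i) (elem T (p i)))) 1"

definition rows_indep :: "nat \<Rightarrow> nat set set \<Rightarrow> nat set set \<Rightarrow> bool" where
  "rows_indep k F A \<longleftrightarrow> (\<forall>c :: nat set \<Rightarrow> ratfun.
     (\<forall>T\<in>F. (\<Sum>S\<in>A. c S * compound k S T) = 0) \<longrightarrow> (\<forall>S\<in>A. c S = 0))"

fun greedy :: "nat \<Rightarrow> nat set set \<Rightarrow> nat set list \<Rightarrow> nat set set \<Rightarrow> nat set set" where
  "greedy k F [] acc = acc"
| "greedy k F (S # Ss) acc =
     (if rows_indep k F (insert S acc) then greedy k F Ss (insert S acc) else greedy k F Ss acc)"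

definition order_list :: "nat \<Rightarrow> nat \<Rightarrow> (nat set \<times> nat set) set \<Rightarrow> nat set list" where
  "order_list n k r = (THE xs. set xs = ksubsets n k \<and> distinct xs \<and>
      sorted_wrt (\<lambda>S T. (S, T) \<in> r) xs)"

definition ext_shift :: "nat \<Rightarrow> nat \<Rightarrow> (nat set \<times> nat set) set \<Rightarrow> nat set set \<Rightarrow> nat set set" where
  "ext_shift n k r F = greedy k F (order_list n k r) {}"

definition Bset :: "nat \<Rightarrow> nat set set" where
  "Bset n = {{a, b} | a b. 1 \<le> a \<and> a < b \<and> b \<le> n \<and> a + b \<le> n}"

end

theory Submission
  imports Defs "Jordan_Normal_Form.Determinant"
begin


definition wg :: "(nat \<Rightarrow> nat \<Rightarrow> rat) \<Rightarrow> nat \<Rightarrow> nat \<Rightarrow> nat \<Rightarrow> nat \<Rightarrow> rat" where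
  "wg f a b i j = f a i * f b j - f a j * f b i"

definition PP :: "nat \<Rightarrow> nat \<Rightarrow> (nat \<times> nat) set" where
  "PP s m = {(a,b). s < a \<and> a < b \<and> b \<le> s + m \<and> a + b \<le> 2*s + m}"

definition tri_free :: "nat set set \<Rightarrow> bool" where
  "tri_free H = (\<forall>x y z. {x,y}\<in>H \<longrightarrow> {y,z}\<in>H \<longrightarrow> {x,z}\<in>H \<longrightarrow> x\<noteq>y \<longrightarrow> y\<noteq>z \<longrightarrow> x\<noteq>z \<longrightarrow> False)"

definition indepP :: "nat set \<Rightarrow> nat \<Rightarrow> nat \<Rightarrow> (nat \<Rightarrow> nat \<Rightarrow> rat) \<Rightarrow> bool" where
  "indepP V s m f = (\<forall>\<beta>. (\<forall>i\<in>V. (\<Sum>a\<in>{s<..s+m}. \<beta> a * f a i) = 0) \<longrightarrow> (\<forall>a\<in>{s<..s+m}. \<beta> a = 0))"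

definition mainP :: "nat set \<Rightarrow> nat set set \<Rightarrow> nat \<Rightarrow> nat \<Rightarrow> (nat \<Rightarrow> nat \<Rightarrow> rat) \<Rightarrow> bool" where
  "mainP V H s m f = (\<forall>c. (\<forall>i\<in>V. \<forall>j\<in>V. i \<noteq> j \<longrightarrow> {i,j} \<notin> H \<longrightarrow>
       (\<Sum>p\<in>PP s m. c p * wg f (fst p) (snd p) i j) = 0) \<longrightarrow> (\<forall>p\<in>PP s m. c p = 0))"

lemma PP_finite: "finite (PP s m)"
  by (rule finite_subset[of _ "{s<..s+m} \<times> {s<..s+m}"]) (auto simp: PP_def)

lemma PP_split: "PP s (Suc (Suc k)) = (\<lambda>b. (Suc s, b)) ` {Suc s<..s+Suc k} \<union> PP (Suc s) k"
  by (auto simp: PP_def image_def)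

lemma PP_not: "(Suc s, x) \<notin> PP (Suc s) k"
  by (simp add: PP_def)

lemma range_split: "{s<..s + Suc (Suc k)} = insert (Suc s) (insert (s + Suc (Suc k)) {Suc s<..Suc s + k})"
  by auto

lemma core:
  "finite V \<Longrightarrow> card V = m \<Longrightarrow> tri_free H \<Longrightarrow> \<exists>f. indepP V s m f \<and> mainP V H s m f"
proof (induction m arbitrary: V s rule: less_induct)
  case (less m)
  show ?case
  proof (cases "m < 2")
    case True
    then consider "m = 0" | "m = 1" by linarith
    then show ?thesis
    proof cases
      case 1
      have "PP s m = {}" using 1 by (auto simp: PP_def)
      then show ?thesis using 1 by (auto simp: indepP_def mainP_def)
    next
      case 2
      then obtain v where V: "V = {v}" using less.prems card_1_singletonE by metis
      have "PP s m = {}" using 2 by (auto simp: PP_def)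
      moreover have "{s<..s+m} = {Suc s}" using 2 by auto
      ultimately have "indepP V s m (\<lambda>a i. 1) \<and> mainP V H s m (\<lambda>a i. 1)"
        using V by (auto simp: indepP_def mainP_def)
      then show ?thesis by blast
    qed
  next
    case False
    then obtain k where m: "m = Suc (Suc k)" by (metis add_2_eq_Suc le_Suc_ex not_less)
    have "\<exists>u v. u \<in> V \<and> v \<in> V \<and> u \<noteq> v \<and> (\<forall>w\<in>V. w \<noteq> u \<longrightarrow> w \<noteq> v \<longrightarrow> \<not> ({u,w}\<in>H \<and> {v,w}\<in>H))"
    proof (cases "\<exists>u\<in>V. \<exists>v\<in>V. u \<noteq> v \<and> {u,v} \<in> H")
      case True
      then obtain u v where uv: "u \<in> V" "v \<in> V" "u \<noteq> v" "{u,v}\<in>H" by blast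
      have "\<forall>w\<in>V. w \<noteq> u \<longrightarrow> w \<noteq> v \<longrightarrow> \<not> ({u,w}\<in>H \<and> {v,w}\<in>H)"
      proof (intro ballI impI notI)
        fix w assume "w \<in> V" "w \<noteq> u" "w \<noteq> v" "{u,w}\<in>H \<and> {v,w}\<in>H"
        then show False using less.prems(3) uv unfolding tri_free_def
          by (metis insert_commute)
      qed
      then show ?thesis using uv by blast
    next
      case False
      have "\<not> card V \<le> Suc 0" using less.prems m by simp
      then obtain u v where uv: "u \<in> V" "v \<in> V" "u \<noteq> v"
        using card_le_Suc0_iff_eq[OF less.prems(1)] by blast
      have "\<forall>w\<in>V. w \<noteq> u \<longrightarrow> w \<noteq> v \<longrightarrow> \<not> ({u,w}\<in>H \<and> {v,w}\<in>H)"
        using False uv(1) by auto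
      then show ?thesis using uv by blast
    qed
    then obtain u v where u: "u \<in> V" and v: "v \<in> V" and uv: "u \<noteq> v"
      and nb: "\<And>w. w\<in>V \<Longrightarrow> w \<noteq> u \<Longrightarrow> w \<noteq> v \<Longrightarrow> \<not> ({u,w}\<in>H \<and> {v,w}\<in>H)" by blast
    define V' where "V' = V - {u,v}"
    have fV': "finite V'" using less.prems by (simp add: V'_def)
    have cV': "card V' = k" using less.prems u v uv m unfolding V'_def
      by (simp add: card_Diff_subset)
    obtain f' where If': "indepP V' (Suc s) k f'" and Mf': "mainP V' H (Suc s) k f'"
      using less.IH[of k V' "Suc s"] m fV' cV' less.prems(3) by auto
    define f where "f a i = (if a = Suc s then (if i = u \<or> i = v then 1 else 0)
       else if a = s + m then (if i = u then 1 else 0) else if i \<in> V' then f' a i else (0::rat))" for a i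
    have mid: "a \<in> {Suc s<..Suc s + k} \<Longrightarrow> a \<noteq> Suc s \<and> a \<noteq> s + m" for a using m by auto
    have fmid: "a \<in> {Suc s<..Suc s + k} \<Longrightarrow> f a i = (if i \<in> V' then f' a i else 0)" for a i
      using mid[of a] by (auto simp: f_def)
    have uV': "u \<notin> V'" "v \<notin> V'" by (auto simp: V'_def)
    have fs1: "f (Suc s) x = (if x = u \<or> x = v then 1 else 0)" for x by (simp add: f_def)
    have ind: "indepP V s m f"
      unfolding indepP_def
    proof (intro allI impI)
      fix \<beta> :: "nat \<Rightarrow> rat"
      assume h: "\<forall>i\<in>V. (\<Sum>a\<in>{s<..s+m}. \<beta> a * f a i) = 0"
      have sumeq: "(\<Sum>a\<in>{s<..s+m}. \<beta> a * f a i) = \<beta> (Suc s) * f (Suc s) i + \<beta> (s+m) * f (s+m) i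
          + (\<Sum>a\<in>{Suc s<..Suc s + k}. \<beta> a * f a i)" for i
        unfolding m range_split by (simp add: add.assoc)
      have "(\<Sum>a\<in>{Suc s<..Suc s + k}. \<beta> a * f a i) = 0" if "i \<notin> V'" for i
        using that by (auto simp: fmid intro!: sum.neutral)
      then have zu: "\<beta> (Suc s) * f (Suc s) i + \<beta> (s+m) * f (s+m) i = 0" if "i \<in> {u,v}" for i
        using h sumeq that u v uV' by auto
      have fs: "f (Suc s) u = 1" "f (Suc s) v = 1" "f (s+m) u = 1" "f (s+m) v = 0"
        using uv m by (auto simp: f_def)
      have b1: "\<beta> (Suc s) = 0" using zu[of v] fs by simp
      have b2: "\<beta> (s+m) = 0" using zu[of u] fs b1 by simp
      have "(\<Sum>a\<in>{Suc s<..Suc s + k}. \<beta> a * f' a i) = 0" if "i \<in> V'" for i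
      proof -
        have "i \<in> V" "i \<noteq> u" "i \<noteq> v" using that by (auto simp: V'_def)
        then have "(\<Sum>a\<in>{Suc s<..Suc s + k}. \<beta> a * f a i) = 0" using h sumeq b1 b2 by auto
        then show ?thesis using that by (simp add: fmid)
      qed
      then have b3: "\<forall>a\<in>{Suc s<..Suc s + k}. \<beta> a = 0" using If' unfolding indepP_def by blast
      show "\<forall>a\<in>{s<..s+m}. \<beta> a = 0"
        using b1 b2 b3 unfolding m range_split by auto
    qed
    have mn: "mainP V H s m f"
      unfolding mainP_def
    proof (intro allI impI)
      fix c :: "nat \<times> nat \<Rightarrow> rat"
      assume h: "\<forall>i\<in>V. \<forall>j\<in>V. i \<noteq> j \<longrightarrow> {i,j} \<notin> H \<longrightarrow>
       (\<Sum>p\<in>PP s m. c p * wg f (fst p) (snd p) i j) = 0"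
      have disj: "(\<lambda>b. (Suc s, b)) ` {Suc s<..s+Suc k} \<inter> PP (Suc s) k = {}"
        unfolding PP_def by auto
      have sumeq: "(\<Sum>p\<in>PP s m. c p * wg f (fst p) (snd p) i j) =
          (\<Sum>b\<in>{Suc s<..Suc s+k}. c (Suc s, b) * wg f (Suc s) b i j) +
          (\<Sum>p\<in>PP (Suc s) k. c p * wg f (fst p) (snd p) i j)" for i j
        unfolding m PP_split
        by (subst sum.union_disjoint) (auto simp: PP_finite PP_not sum.reindex inj_on_def)
      have ppmid: "p \<in> PP (Suc s) k \<Longrightarrow> fst p \<in> {Suc s<..Suc s + k} \<and> snd p \<in> {Suc s<..Suc s + k}" for p
        by (auto simp: PP_def)
      have g0: "(\<Sum>b\<in>{Suc s<..Suc s+k}. c (Suc s, b) * f' b w) = 0" if w: "w \<in> V'" for w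
      proof -
        have wV: "w \<in> V" "w \<noteq> u" "w \<noteq> v" using w by (auto simp: V'_def)
        obtain i where i: "i \<in> {u,v}" "{i,w} \<notin> H" using nb[OF wV] by auto
        have iV: "i \<in> V" "i \<noteq> w" "i \<notin> V'" using i u v wV uV' by auto
        have t2: "(\<Sum>p\<in>PP (Suc s) k. c p * wg f (fst p) (snd p) i w) = 0"
          using ppmid iV by (auto simp: wg_def fmid intro!: sum.neutral)
        have t1: "(\<Sum>b\<in>{Suc s<..Suc s+k}. c (Suc s, b) * wg f (Suc s) b i w) =
                  (\<Sum>b\<in>{Suc s<..Suc s+k}. c (Suc s, b) * f' b w)"
          using i iV w uV' by (intro sum.cong) (auto simp: wg_def fmid fs1)
        have "(\<Sum>p\<in>PP s m. c p * wg f (fst p) (snd p) i w) = 0"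
          using h iV(1,2) wV(1) i(2) by blast
        then show ?thesis using sumeq[of i w] t1 t2 by simp
      qed
      have c1: "\<forall>b\<in>{Suc s<..Suc s+k}. c (Suc s, b) = 0"
        using If' g0 unfolding indepP_def
        by (drule_tac x="\<lambda>b. c (Suc s, b)" in spec) blast
      have c2: "\<forall>p\<in>PP (Suc s) k. c p = 0"
      proof -
        have "(\<Sum>p\<in>PP (Suc s) k. c p * wg f' (fst p) (snd p) i j) = 0"
          if "i \<in> V'" "j \<in> V'" "i \<noteq> j" "{i,j} \<notin> H" for i j
        proof -
          have ij: "i \<in> V" "j \<in> V" using that by (auto simp: V'_def)
          have "(\<Sum>b\<in>{Suc s<..Suc s+k}. c (Suc s, b) * wg f (Suc s) b i j) = 0"
            using c1 by simp
          moreover have "(\<Sum>p\<in>PP (Suc s) k. c p * wg f (fst p) (snd p) i j) =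
             (\<Sum>p\<in>PP (Suc s) k. c p * wg f' (fst p) (snd p) i j)"
            using ppmid that by (intro sum.cong) (auto simp: wg_def fmid)
          ultimately show ?thesis using h ij that sumeq[of i j] by auto
        qed
        then show ?thesis using Mf' unfolding mainP_def by blast
      qed
      show "\<forall>p\<in>PP s m. c p = 0" using c1 c2 unfolding m PP_split by auto
    qed
    show ?thesis using ind mn by blast
  qed
qed




lemma rows_indep_mono:
  assumes "finite A" "A' \<subseteq> A" "rows_indep k F A"
  shows "rows_indep k F A'"
  unfolding rows_indep_def
proof (intro allI impI)
  fix c :: "nat set \<Rightarrow> ratfun"
  assume h: "\<forall>T\<in>F. (\<Sum>S\<in>A'. c S * compound k S T) = 0"
  define c' where "c' S = (if S \<in> A' then c S else 0)" for S
  have "\<forall>T\<in>F. (\<Sum>S\<in>A. c' S * compound k S T) = 0"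
  proof
    fix T assume "T \<in> F"
    have "(\<Sum>S\<in>A. c' S * compound k S T) = (\<Sum>S\<in>A'. c' S * compound k S T)"
      using assms(1,2) by (intro sum.mono_neutral_right) (auto simp: c'_def)
    also have "\<dots> = (\<Sum>S\<in>A'. c S * compound k S T)" by (simp add: c'_def)
    finally show "(\<Sum>S\<in>A. c' S * compound k S T) = 0" using h \<open>T \<in> F\<close> by simp
  qed
  then have "\<forall>S\<in>A. c' S = 0" using assms(3) unfolding rows_indep_def by blast
  then show "\<forall>S\<in>A'. c S = 0" using assms(2) unfolding c'_def by (metis subsetD)
qed

lemma greedy_mono: "acc \<subseteq> greedy k F xs acc"
proof (induction xs arbitrary: acc)
  case (Cons S Ss)
  show ?case using Cons.IH[of "insert S acc"] Cons.IH[of acc] by auto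
qed simp

lemma greedy_append: "greedy k F (xs @ ys) acc = greedy k F ys (greedy k F xs acc)"
  by (induction xs arbitrary: acc) auto

lemma greedy_all: "rows_indep k F (acc \<union> set xs) \<Longrightarrow> finite acc \<Longrightarrow>
   greedy k F xs acc = acc \<union> set xs"
proof (induction xs arbitrary: acc)
  case Nil then show ?case by simp
next
  case (Cons S Ss)
  have "rows_indep k F (insert S acc)"
    using rows_indep_mono[OF _ _ Cons.prems(1)] Cons.prems(2) by auto
  have e: "insert S acc \<union> set Ss = acc \<union> set (S # Ss)" by auto
  have A: "greedy k F Ss (insert S acc) = insert S acc \<union> set Ss"
    using Cons.IH[of "insert S acc"] Cons.prems(1,2) e by simp
  have B: "greedy k F (S # Ss) acc = greedy k F Ss (insert S acc)"
    using \<open>rows_indep k F (insert S acc)\<close> by simp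
  show ?case by (rule trans[OF trans[OF B A] e])
qed

fun insr :: "('a \<times> 'a) set \<Rightarrow> 'a \<Rightarrow> 'a list \<Rightarrow> 'a list" where
  "insr r x [] = [x]"
| "insr r x (y # ys) = (if (x, y) \<in> r then x # y # ys else y # insr r x ys)"

lemma set_ins: "set (insr r x ys) = insert x (set ys)"
  by (induction ys) auto

lemma distinct_ins: "x \<notin> set ys \<Longrightarrow> distinct ys \<Longrightarrow> distinct (insr r x ys)"
  by (induction ys) (auto simp: set_ins)

lemma sorted_ins:
  assumes "trans r" "\<forall>y\<in>set ys. (x, y) \<in> r \<or> (y, x) \<in> r" "sorted_wrt (\<lambda>a b. (a, b) \<in> r) ys"
  shows "sorted_wrt (\<lambda>a b. (a, b) \<in> r) (insr r x ys)"
  using assms(2,3)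
proof (induction ys)
  case Nil then show ?case by simp
next
  case (Cons y ys)
  show ?case
  proof (cases "(x, y) \<in> r")
    case True
    have "(x, z) \<in> r" if "z \<in> set ys" for z
    proof -
      have "(y, z) \<in> r" using Cons.prems(2) that by simp
      then show ?thesis using transD[OF assms(1) True] by blast
    qed
    then show ?thesis using Cons.prems(2) True by simp
  next
    case False
    then have yx: "(y, x) \<in> r" using Cons.prems by auto
    have s1: "sorted_wrt (\<lambda>a b. (a, b) \<in> r) (insr r x ys)" using Cons.IH Cons.prems by simp
    have s2: "\<forall>z\<in>set (insr r x ys). (y, z) \<in> r" using yx Cons.prems(2) by (simp add: set_ins)
    show ?thesis using False s1 s2 by simp
  qed
qed

lemma exists_sorted:
  assumes "finite A" "A \<subseteq> K" "trans r" "total_on K r" "refl_on K r"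
  shows "\<exists>xs. set xs = A \<and> distinct xs \<and> sorted_wrt (\<lambda>a b. (a, b) \<in> r) xs"
  using assms(1,2)
proof (induction A rule: finite_induct)
  case empty then show ?case by simp
next
  case (insert x F)
  have FK: "F \<subseteq> K" "x \<in> K" using insert.prems by auto
  obtain xs where xs: "set xs = F" "distinct xs" "sorted_wrt (\<lambda>a b. (a, b) \<in> r) xs"
    using insert.IH FK(1) by blast
  have tot: "(x, y) \<in> r \<or> (y, x) \<in> r" if "y \<in> set xs" for y
  proof -
    have "y \<in> K" "x \<noteq> y" using that xs(1) FK insert.hyps(2) by auto
    then show ?thesis using assms(4) FK(2) unfolding total_on_def by blast
  qed
  then have "\<forall>y\<in>set xs. (x, y) \<in> r \<or> (y, x) \<in> r" by blast
  then have "sorted_wrt (\<lambda>a b. (a, b) \<in> r) (insr r x xs)" using sorted_ins[OF assms(3)] xs(3) by blast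
  moreover have "set (insr r x xs) = insert x F" using xs(1) by (simp add: set_ins)
  moreover have "distinct (insr r x xs)" using xs insert by (simp add: distinct_ins)
  ultimately show ?case by blast
qed

lemma sorted_unique:
  assumes "antisym r"
  shows "sorted_wrt (\<lambda>a b. (a, b) \<in> r) xs \<Longrightarrow> sorted_wrt (\<lambda>a b. (a, b) \<in> r) ys \<Longrightarrow>
    distinct xs \<Longrightarrow> distinct ys \<Longrightarrow> set xs = set ys \<Longrightarrow> xs = ys"
proof (induction xs arbitrary: ys)
  case Nil then show ?case by simp
next
  case (Cons x xs)
  then obtain y ys' where ys: "ys = y # ys'" by (cases ys) auto
  have "x = y"
  proof (rule ccontr)
    assume "x \<noteq> y"
    then have "y \<in> set xs" "x \<in> set ys'" using Cons.prems ys by auto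
    then have "(x, y) \<in> r" "(y, x) \<in> r" using Cons.prems ys by auto
    then show False using assms \<open>x \<noteq> y\<close> by (auto dest: antisymD)
  qed
  then have "set xs = set ys'" using Cons.prems ys by auto
  moreover have "sorted_wrt (\<lambda>a b. (a, b) \<in> r) xs" "distinct xs"
    using Cons.prems(1,3) by auto
  moreover have "sorted_wrt (\<lambda>a b. (a, b) \<in> r) ys'" "distinct ys'"
    using Cons.prems(2,4) ys by auto
  ultimately have "xs = ys'" using Cons.IH by blast
  then show ?case using ys \<open>x = y\<close> by simp
qed

lemma order_list_props:
  assumes "term_order n k r"
  shows "set (order_list n k r) = ksubsets n k \<and> distinct (order_list n k r) \<and>
         sorted_wrt (\<lambda>S T. (S, T) \<in> r) (order_list n k r)"
proof -
  have lo: "linear_order_on (ksubsets n k) r" using assms by (simp add: term_order_def)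
  then have tr: "trans r" "total_on (ksubsets n k) r" "refl_on (ksubsets n k) r" "antisym r"
    by (auto simp: linear_order_on_def partial_order_on_def preorder_on_def)
  have fin: "finite (ksubsets n k)"
    by (rule finite_subset[of _ "Pow {1..n}"]) (auto simp: ksubsets_def)
  obtain xs where xs: "set xs = ksubsets n k \<and> distinct xs \<and> sorted_wrt (\<lambda>S T. (S, T) \<in> r) xs"
    using exists_sorted[OF fin order_refl tr(1-3)] by blast
  show ?thesis unfolding order_list_def
  proof (rule theI[of _ xs])
    show "set xs = ksubsets n k \<and> distinct xs \<and> sorted_wrt (\<lambda>S T. (S, T) \<in> r) xs" using xs .
  next
    fix ys assume ys: "set ys = ksubsets n k \<and> distinct ys \<and> sorted_wrt (\<lambda>S T. (S, T) \<in> r) ys"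
    show "ys = xs"
      by (rule sorted_unique[OF tr(4)]) (use xs ys in auto)
  qed
qed




definition mon :: "(nat \<Rightarrow> nat \<Rightarrow> rat) \<Rightarrow> ((nat \<times> nat) \<Rightarrow>\<^sub>0 nat) \<Rightarrow> rat" where
  "mon X m = (\<Prod>v\<in>Poly_Mapping.keys m. X (fst v) (snd v) ^ Poly_Mapping.lookup m v)"

definition ev :: "(nat \<Rightarrow> nat \<Rightarrow> rat) \<Rightarrow> mpoly \<Rightarrow> rat" where
  "ev X p = (\<Sum>m\<in>Poly_Mapping.keys p. Poly_Mapping.lookup p m * mon X m)"

lemma mon_superset: "finite V \<Longrightarrow> Poly_Mapping.keys m \<subseteq> V \<Longrightarrow> mon X m = (\<Prod>v\<in>V. X (fst v) (snd v) ^ Poly_Mapping.lookup m v)"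
  unfolding mon_def by (rule prod.mono_neutral_left) (auto simp: in_keys_iff)

lemma mon_add: "mon X (m + m') = mon X m * mon X m'"
proof -
  let ?V = "Poly_Mapping.keys m \<union> Poly_Mapping.keys m'"
  have "mon X (m + m') = (\<Prod>v\<in>?V. X (fst v) (snd v) ^ Poly_Mapping.lookup (m + m') v)"
    using keys_add[of m m'] by (intro mon_superset) auto
  also have "\<dots> = (\<Prod>v\<in>?V. X (fst v) (snd v) ^ Poly_Mapping.lookup m v * X (fst v) (snd v) ^ Poly_Mapping.lookup m' v)"
    by (simp add: lookup_add power_add)
  also have "\<dots> = mon X m * mon X m'"
    by (simp add: prod.distrib mon_superset[of ?V])
  finally show ?thesis .
qed

lemma ev_superset: "finite M \<Longrightarrow> Poly_Mapping.keys p \<subseteq> M \<Longrightarrow> ev X p = (\<Sum>m\<in>M. Poly_Mapping.lookup p m * mon X m)"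
  unfolding ev_def by (rule sum.mono_neutral_left) (auto simp: in_keys_iff)

lemma ev_add: "ev X (p + q) = ev X p + ev X q"
proof -
  let ?M = "Poly_Mapping.keys p \<union> Poly_Mapping.keys q"
  have "ev X (p + q) = (\<Sum>m\<in>?M. Poly_Mapping.lookup (p + q) m * mon X m)"
    using keys_add[of p q] by (intro ev_superset) auto
  also have "\<dots> = (\<Sum>m\<in>?M. Poly_Mapping.lookup p m * mon X m) + (\<Sum>m\<in>?M. Poly_Mapping.lookup q m * mon X m)"
    by (simp add: lookup_add distrib_right sum.distrib)
  also have "\<dots> = ev X p + ev X q"
    by (simp add: ev_superset[of ?M])
  finally show ?thesis .
qed

lemma ev_zero: "ev X 0 = 0" by (simp add: ev_def)

lemma ev_sum: "ev X (sum f A) = (\<Sum>a\<in>A. ev X (f a))"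
  by (induction A rule: infinite_finite_induct) (auto simp: ev_zero ev_add)

lemma ev_single: "ev X (Poly_Mapping.single m a) = a * mon X m"
  by (simp add: ev_def)

lemma pm_repr: "p = (\<Sum>m\<in>Poly_Mapping.keys p. Poly_Mapping.single m (Poly_Mapping.lookup p m))"
proof (rule poly_mapping_eqI)
  fix k
  show "Poly_Mapping.lookup p k = Poly_Mapping.lookup (\<Sum>m\<in>Poly_Mapping.keys p. Poly_Mapping.single m (Poly_Mapping.lookup p m)) k"
    unfolding lookup_sum lookup_single
    by (cases "k \<in> Poly_Mapping.keys p") (auto simp: when_def in_keys_iff)
qed

lemma ev_mult: "ev X (p * q) = ev X p * ev X q"
proof -
  have "p * q = (\<Sum>m\<in>Poly_Mapping.keys p. Poly_Mapping.single m (Poly_Mapping.lookup p m)) * (\<Sum>m'\<in>Poly_Mapping.keys q. Poly_Mapping.single m' (Poly_Mapping.lookup q m'))"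
    using pm_repr[of p] pm_repr[of q] by simp
  also have "\<dots> = (\<Sum>m\<in>Poly_Mapping.keys p. \<Sum>m'\<in>Poly_Mapping.keys q. Poly_Mapping.single (m + m') (Poly_Mapping.lookup p m * Poly_Mapping.lookup q m'))"
    by (simp add: sum_product mult_single)
  finally have "ev X (p * q) = (\<Sum>m\<in>Poly_Mapping.keys p. \<Sum>m'\<in>Poly_Mapping.keys q. Poly_Mapping.lookup p m * Poly_Mapping.lookup q m' * mon X (m + m'))"
    by (simp add: ev_sum ev_single)
  also have "\<dots> = ev X p * ev X q"
    by (simp add: ev_def sum_product mon_add mult_ac)
  finally show ?thesis .
qed

lemma ev_one: "ev X 1 = 1"
  using ev_single[of X 0 1] by (simp add: mon_def)

interpretation evh: comm_ring_hom "ev X"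
  by unfold_locales (auto simp: ev_add ev_mult ev_one ev_zero)

lemma ev_var: "ev X (var i j) = X i j"
  by (simp add: var_def ev_single mon_def)




lemma card2: "card S = 2 \<Longrightarrow> \<exists>a b. a < b \<and> S = {a, b :: nat}"
proof -
  assume "card S = 2"
  then obtain x y where S: "S = {x, y}" and xy: "x \<noteq> y" by (auto simp: card_2_iff)
  show ?thesis
  proof (cases "x < y")
    case True then show ?thesis using S by blast
  next
    case False
    then have "y < x" using xy by simp
    moreover have "S = {y, x}" using S by (simp add: insert_commute)
    ultimately show ?thesis by blast
  qed
qed

lemma sl2: "a < b \<Longrightarrow> sorted_list_of_set {a, b :: nat} = [a, b]"
  by (subst sorted_list_of_set_unique[symmetric]) auto

lemma elem2: "a < b \<Longrightarrow> Defs.elem {a, b} 0 = a \<and> Defs.elem {a, b} (Suc 0) = b"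
  by (simp add: Defs.elem_def sl2)

definition cpoly :: "nat set \<Rightarrow> nat set \<Rightarrow> mpoly" where
  "cpoly S T = var (Defs.elem S 0) (Defs.elem T 0) * var (Defs.elem S 1) (Defs.elem T 1) -
               var (Defs.elem S 0) (Defs.elem T 1) * var (Defs.elem S 1) (Defs.elem T 0)"

lemma perms2: "{p. p permutes {..<2::nat}} = {id, Transposition.transpose 0 1}"
proof -
  have "{..<2::nat} = {0, 1}" by auto
  then show ?thesis by (auto simp: permutes_doubleton_iff)
qed

lemma compound2: "compound 2 S T = to_fract (cpoly S T)"
proof -
  let ?t = "Transposition.transpose (0::nat) 1"
  define g where "g p = of_int (sign p) * (\<Prod>i<2. var (Defs.elem S i) (Defs.elem T (p i)))" for p
  have ne: "id \<noteq> ?t"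
    by (metis id_apply transpose_apply_first zero_neq_one)
  have pr: "(\<Prod>i<2. h i) = h 0 * h (1::nat)" for h :: "nat \<Rightarrow> mpoly"
    by (simp add: numeral_2_eq_2)
  have "(\<Sum>p | p permutes {..<2}. g p) = g id + g ?t"
    unfolding perms2 using ne by simp
  moreover have "g id = var (Defs.elem S 0) (Defs.elem T 0) * var (Defs.elem S 1) (Defs.elem T 1)"
    unfolding g_def pr by (simp add: sign_id)
  moreover have "g ?t = - (var (Defs.elem S 0) (Defs.elem T 1) * var (Defs.elem S 1) (Defs.elem T 0))"
    unfolding g_def pr by (simp add: sign_swap_id)
  ultimately have "(\<Sum>p | p permutes {..<2}. g p) = cpoly S T"
    by (simp add: cpoly_def)
  then show ?thesis unfolding compound_def to_fract_def g_def by simp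
qed

definition wS :: "(nat \<Rightarrow> nat \<Rightarrow> rat) \<Rightarrow> nat set \<Rightarrow> nat set \<Rightarrow> rat" where
  "wS X S T = wg X (Defs.elem S 0) (Defs.elem S 1) (Defs.elem T 0) (Defs.elem T 1)"

lemma ev_cpoly: "ev X (cpoly S T) = wS X S T"
  by (simp add: cpoly_def wS_def wg_def ev_var evh.hom_mult evh.hom_minus)




lemma elem2': "a < b \<Longrightarrow> Defs.elem {a, b} 0 = a \<and> Defs.elem {a, b} 1 = b"
  using elem2 by simp

lemma Bset_image: "Bset n = (\<lambda>p. {fst p, snd p}) ` PP 0 n"
proof
  show "Bset n \<subseteq> (\<lambda>p. {fst p, snd p}) ` PP 0 n"
  proof
    fix S assume "S \<in> Bset n"
    then obtain a b where ab: "S = {a, b}" "1 \<le> a" "a < b" "b \<le> n" "a + b \<le> n"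
      unfolding Bset_def by blast
    have "(a, b) \<in> PP 0 n" using ab by (simp add: PP_def)
    moreover have "S = {fst (a, b), snd (a, b)}" using ab by simp
    ultimately show "S \<in> (\<lambda>p. {fst p, snd p}) ` PP 0 n" by blast
  qed
next
  show "(\<lambda>p. {fst p, snd p}) ` PP 0 n \<subseteq> Bset n"
  proof
    fix S assume "S \<in> (\<lambda>p. {fst p, snd p}) ` PP 0 n"
    then obtain p where p: "p \<in> PP 0 n" "S = {fst p, snd p}" by blast
    obtain a b where pab: "p = (a, b)" by (cases p)
    have ab: "0 < a" "a < b" "b \<le> n" "a + b \<le> n" using p(1) pab by (simp_all add: PP_def)
    have "S = {a, b}" using p(2) pab by simp
    then show "S \<in> Bset n" unfolding Bset_def using ab by (intro CollectI exI[of _ a] exI[of _ b]) simp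
  qed
qed

lemma inj_PP: "inj_on (\<lambda>p. {fst p, snd p}) (PP 0 n)"
  unfolding inj_on_def PP_def by (auto simp: doubleton_eq_iff)

lemma ksubsets_finite: "finite (ksubsets n k)"
  by (rule finite_subset[of _ "Pow {1..n}"]) (auto simp: ksubsets_def)

lemma Bset_sub: "Bset n \<subseteq> ksubsets n 2"
  unfolding Bset_def ksubsets_def by auto

lemma wS_PP:
  assumes "p \<in> PP 0 n" "i \<noteq> j"
  shows "wS f {fst p, snd p} {i, j} = (if i < j then 1 else -1) * wg f (fst p) (snd p) i j"
proof -
  have ab: "fst p < snd p" using assms(1) by (auto simp: PP_def)
  show ?thesis
  proof (cases "i < j")
    case True
    then show ?thesis using ab by (simp add: wS_def elem2 elem2')
  next
    case False
    then have "j < i" using assms(2) by simp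
    moreover have "{i, j} = {j, i}" by auto
    ultimately show ?thesis using ab False by (simp add: wS_def elem2 elem2' wg_def)
  qed
qed

lemma core_sets:
  assumes G: "G \<subseteq> ksubsets n 2" and tri: "\<And>T. T \<subseteq> {1..n} \<Longrightarrow> card T = 3 \<Longrightarrow> \<exists>e\<in>G. e \<subseteq> T"
  shows "\<exists>X. \<forall>c. (\<forall>T\<in>G. (\<Sum>S\<in>Bset n. c S * wS X S T) = 0) \<longrightarrow> (\<forall>S\<in>Bset n. c S = 0)"
proof -
  define H where "H = ksubsets n 2 - G"
  have tf: "tri_free H"
    unfolding tri_free_def
  proof (intro allI impI)
    fix x y z assume h: "{x,y}\<in>H" "{y,z}\<in>H" "{x,z}\<in>H" "x\<noteq>y" "y\<noteq>z" "x\<noteq>z"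
    have sub: "{x,y,z} \<subseteq> {1..n}" using h(1-3) by (auto simp: H_def ksubsets_def)
    have "card {x,y,z} = 3" using h(4-6) by simp
    then obtain e where e: "e \<in> G" "e \<subseteq> {x,y,z}" using tri sub by blast
    have "card e = 2" using e G by (auto simp: ksubsets_def)
    then obtain a b where ab: "e = {a,b}" "a \<noteq> b" by (auto simp: card_2_iff)
    have a3: "a = x \<or> a = y \<or> a = z" "b = x \<or> b = y \<or> b = z" using ab e(2) by auto
    have h': "{y,x}\<in>H" "{z,y}\<in>H" "{z,x}\<in>H" using h(1-3) by (simp_all add: insert_commute)
    have "e \<in> H" unfolding ab(1) using a3 ab(2) h(1-3) h' by (elim disjE) simp_all
    then show False using e(1) by (simp add: H_def)
  qed
  obtain f where mf: "mainP {1..n} H 0 n f" using core[of "{1..n}" n H 0] tf by auto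
  show ?thesis
  proof (intro exI[of _ f] allI impI)
    fix c :: "nat set \<Rightarrow> rat"
    assume h: "\<forall>T\<in>G. (\<Sum>S\<in>Bset n. c S * wS f S T) = 0"
    define c0 where "c0 p = c {fst p, snd p}" for p
    have key: "(\<Sum>p\<in>PP 0 n. c0 p * wg f (fst p) (snd p) i j) = 0"
      if ij: "i \<in> {1..n}" "j \<in> {1..n}" "i \<noteq> j" "{i,j} \<notin> H" for i j
    proof -
      have TG: "{i,j} \<in> G" using ij by (auto simp: H_def ksubsets_def)
      have re: "(\<Sum>S\<in>Bset n. c S * wS f S {i,j}) = (\<Sum>p\<in>PP 0 n. c0 p * wS f {fst p, snd p} {i,j})"
        unfolding Bset_image by (subst sum.reindex[OF inj_PP]) (simp add: c0_def)
      have "(\<Sum>p\<in>PP 0 n. c0 p * wS f {fst p, snd p} {i,j}) =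
            (\<Sum>p\<in>PP 0 n. (if i < j then 1 else -1) * (c0 p * wg f (fst p) (snd p) i j))"
        using ij(3) by (intro sum.cong) (auto simp: wS_PP)
      also have "\<dots> = (if i < j then 1 else -1) * (\<Sum>p\<in>PP 0 n. c0 p * wg f (fst p) (snd p) i j)"
        by (simp add: sum_distrib_left)
      finally have "(if i < j then 1 else -1) * (\<Sum>p\<in>PP 0 n. c0 p * wg f (fst p) (snd p) i j) = 0"
        using h TG re by simp
      then show ?thesis by (simp split: if_splits)
    qed
    have "\<forall>p\<in>PP 0 n. c0 p = 0"
      using mf key unfolding mainP_def by (drule_tac x=c0 in spec) auto
    then show "\<forall>S\<in>Bset n. c S = 0" unfolding Bset_image c0_def by auto
  qed
qed




lemma sum_set_nth: "distinct xs \<Longrightarrow> (\<Sum>x\<in>set xs. g x) = (\<Sum>i<length xs. g (xs ! i))"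
proof -
  assume d: "distinct xs"
  have "set xs = (\<lambda>i. xs ! i) ` {..<length xs}" by (auto simp: in_set_conv_nth image_def)
  moreover have "inj_on (\<lambda>i. xs ! i) {..<length xs}" using d by (simp add: inj_on_def nth_eq_iff_index_eq)
  ultimately show ?thesis by (simp add: sum.reindex)
qed

lemma mv_entry: "i < d \<Longrightarrow> dim_vec v = d \<Longrightarrow> (mat d d F *\<^sub>v v) $ i = (\<Sum>j<d. F (i, j) * v $ j)"
  by (simp add: scalar_prod_def atLeast0LessThan)

lemma gram_sum:
  fixes a :: "nat \<Rightarrow> nat \<Rightarrow> 'a :: comm_ring_1"
  shows "(\<Sum>j<d. (\<Sum>l<e. a i l * a j l) * v j) = (\<Sum>l<e. a i l * (\<Sum>j<d. v j * a j l))"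
proof -
  have "(\<Sum>j<d. (\<Sum>l<e. a i l * a j l) * v j) = (\<Sum>j<d. \<Sum>l<e. a i l * (v j * a j l))"
    by (simp add: sum_distrib_right sum_distrib_left mult_ac)
  also have "\<dots> = (\<Sum>l<e. \<Sum>j<d. a i l * (v j * a j l))" by (rule sum.swap)
  also have "\<dots> = (\<Sum>l<e. a i l * (\<Sum>j<d. v j * a j l))" by (simp add: sum_distrib_left)
  finally show ?thesis .
qed

lemma rows_indep_B:
  assumes G: "G \<subseteq> ksubsets n 2" and tri: "\<And>T. T \<subseteq> {1..n} \<Longrightarrow> card T = 3 \<Longrightarrow> \<exists>e\<in>G. e \<subseteq> T"
  shows "rows_indep 2 G (Bset n)"
proof -
  obtain X where cs: "\<And>c. (\<forall>T\<in>G. (\<Sum>S\<in>Bset n. c S * wS X S T) = 0) \<Longrightarrow> (\<forall>S\<in>Bset n. c S = 0)"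
    using core_sets[OF G tri] by blast
  have finB: "finite (Bset n)" using Bset_sub ksubsets_finite finite_subset by blast
  have finG: "finite G" using G ksubsets_finite finite_subset by blast
  obtain bs where bs: "set bs = Bset n" "distinct bs" using finite_distinct_list[OF finB] by blast
  obtain gs where gs: "set gs = G" "distinct gs" using finite_distinct_list[OF finG] by blast
  define d where "d = length bs"
  define e where "e = length gs"
  have sB: "(\<Sum>S\<in>Bset n. g S) = (\<Sum>i<d. g (bs ! i))" for g :: "nat set \<Rightarrow> 'a::comm_monoid_add"
    unfolding d_def bs(1)[symmetric] using bs(2) by (rule sum_set_nth)
  have gsG: "l < e \<Longrightarrow> gs ! l \<in> G" for l using gs(1) by (auto simp: e_def)
  have Gg: "T \<in> G \<Longrightarrow> \<exists>l<e. gs ! l = T" for T using gs(1) by (auto simp: e_def in_set_conv_nth)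
  define N :: "mpoly mat" where "N = mat d d (\<lambda>(i,j). \<Sum>l<e. cpoly (bs!i) (gs!l) * cpoly (bs!j) (gs!l))"
  define N0 :: "rat mat" where "N0 = mat d d (\<lambda>(i,j). \<Sum>l<e. wS X (bs!i) (gs!l) * wS X (bs!j) (gs!l))"
  have N0c: "N0 \<in> carrier_mat d d" by (simp add: N0_def)
  have mapN: "map_mat (ev X) N = N0"
    by (rule eq_matI) (auto simp: N_def N0_def evh.hom_sum evh.hom_mult ev_cpoly)
  have d0: "det N0 \<noteq> 0"
  proof
    assume "det N0 = 0"
    then obtain y where y: "y \<in> carrier_vec d" "y \<noteq> 0\<^sub>v d" "N0 *\<^sub>v y = 0\<^sub>v d"
      using det_0_iff_vec_prod_zero_field[OF N0c] by auto
    have dy: "dim_vec y = d" using y(1) by simp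
    define w where "w i l = wS X (bs!i) (gs!l)" for i l
    define z where "z l = (\<Sum>i<d. y$i * w i l)" for l
    have ent: "(N0 *\<^sub>v y) $ i = (\<Sum>l<e. w i l * z l)" if "i < d" for i
    proof -
      have "(N0 *\<^sub>v y) $ i = (\<Sum>j<d. (\<Sum>l<e. w i l * w j l) * y $ j)"
        unfolding N0_def mv_entry[OF that dy] by (simp add: w_def)
      also have "\<dots> = (\<Sum>l<e. w i l * z l)" unfolding z_def by (rule gram_sum)
      finally show ?thesis .
    qed
    have zz: "(\<Sum>i<d. y$i * w i l * z l) = z l * z l" for l
      unfolding z_def[of l] by (simp add: sum_distrib_right)
    have "(\<Sum>i<d. y$i * (\<Sum>l<e. w i l * z l)) = (\<Sum>i<d. \<Sum>l<e. y$i * w i l * z l)"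
      by (simp add: sum_distrib_left mult_ac)
    also have "\<dots> = (\<Sum>l<e. \<Sum>i<d. y$i * w i l * z l)" by (rule sum.swap)
    also have "\<dots> = (\<Sum>l<e. z l * z l)" by (simp add: zz)
    finally have "(\<Sum>l<e. z l * z l) = (\<Sum>i<d. y$i * (\<Sum>l<e. w i l * z l))" by simp
    also have "\<dots> = (\<Sum>i<d. y$i * (N0 *\<^sub>v y) $ i)" by (simp add: ent)
    also have "\<dots> = 0" using y(3) by simp
    finally have sq: "(\<Sum>l<e. z l * z l) = 0" .
    have z0: "z l = 0" if "l < e" for l
    proof -
      have "\<forall>l\<in>{..<e}. z l * z l = 0"
        using sq by (subst sum_nonneg_eq_0_iff[symmetric]) auto
      then show ?thesis using that by simp
    qed
    define c where "c S = y $ (inv_into {..<d} (\<lambda>i. bs ! i) S)" for S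
    have inj: "inj_on (\<lambda>i. bs ! i) {..<d}" using bs(2) by (simp add: inj_on_def nth_eq_iff_index_eq d_def)
    have cb: "c (bs ! i) = y $ i" if "i < d" for i
      unfolding c_def using inv_into_f_f[OF inj] that by simp
    have "\<forall>S\<in>Bset n. c S = 0"
    proof (rule cs, rule ballI)
      fix T assume "T \<in> G"
      then obtain l where l: "l < e" "gs ! l = T" using Gg by blast
      have "(\<Sum>S\<in>Bset n. c S * wS X S T) = (\<Sum>i<d. y $ i * w i l)"
        unfolding sB w_def l(2)[symmetric] by (simp add: cb)
      also have "\<dots> = 0" using z0[OF l(1)] by (simp add: z_def)
      finally show "(\<Sum>S\<in>Bset n. c S * wS X S T) = 0" .
    qed
    then have "y $ i = 0" if "i < d" for i
    proof -
      have "bs ! i \<in> Bset n" using that bs(1) by (metis d_def nth_mem)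
      then show ?thesis using cb[OF that] \<open>\<forall>S\<in>Bset n. c S = 0\<close> by simp
    qed
    then have "y = 0\<^sub>v d" using dy by (intro eq_vecI) auto
    then show False using y(2) by simp
  qed
  have Nc: "N \<in> carrier_mat d d" by (simp add: N_def)
  have "ev X (det N) = det N0" using evh.hom_det[of X N] mapN by simp
  then have detN: "det N \<noteq> 0" using d0 by (auto simp: evh.hom_zero)
  interpret tf: inj_comm_ring_hom "to_fract :: mpoly \<Rightarrow> mpoly fract" by (unfold_locales, auto)
  define Nf where "Nf = map_mat to_fract N"
  have Nfc: "Nf \<in> carrier_mat d d" by (simp add: Nf_def N_def)
  have detNf: "det Nf \<noteq> 0" unfolding Nf_def tf.hom_det using detN by simp
  have Nf_eq: "Nf = mat d d (\<lambda>(i,j). \<Sum>l<e. compound 2 (bs!i) (gs!l) * compound 2 (bs!j) (gs!l))"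
    by (rule eq_matI) (auto simp: Nf_def N_def tf.hom_sum tf.hom_mult compound2)
  show ?thesis
    unfolding rows_indep_def
  proof (intro allI impI)
    fix c :: "nat set \<Rightarrow> ratfun"
    assume h: "\<forall>T\<in>G. (\<Sum>S\<in>Bset n. c S * compound 2 S T) = 0"
    define v where "v = vec d (\<lambda>i. c (bs ! i))"
    have dv: "dim_vec v = d" by (simp add: v_def)
    have "Nf *\<^sub>v v = 0\<^sub>v d"
    proof (rule eq_vecI)
      fix i assume "i < dim_vec (0\<^sub>v d :: ratfun vec)"
      then have i: "i < d" by simp
      have "(Nf *\<^sub>v v) $ i = (\<Sum>j<d. (\<Sum>l<e. compound 2 (bs!i) (gs!l) * compound 2 (bs!j) (gs!l)) * c (bs ! j))"
        unfolding Nf_eq mv_entry[OF i dv] by (simp add: v_def)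
      also have "\<dots> = (\<Sum>l<e. compound 2 (bs!i) (gs!l) * (\<Sum>j<d. c (bs ! j) * compound 2 (bs!j) (gs!l)))"
        by (rule gram_sum)
      also have "\<dots> = 0"
      proof (rule sum.neutral, rule ballI)
        fix l assume "l \<in> {..<e}"
        then have "(\<Sum>j<d. c (bs ! j) * compound 2 (bs!j) (gs!l)) = 0"
          using h gsG[of l] sum_set_nth[OF bs(2), of "\<lambda>S. c S * compound 2 S (gs!l)"] bs(1)
          by (simp add: d_def)
        then show "compound 2 (bs!i) (gs!l) * (\<Sum>j<d. c (bs ! j) * compound 2 (bs!j) (gs!l)) = 0" by simp
      qed
      finally show "(Nf *\<^sub>v v) $ i = 0\<^sub>v d $ i" using i by simp
    qed (use Nfc in simp)
    moreover have "\<not> (\<exists>v. v \<in> carrier_vec d \<and> v \<noteq> 0\<^sub>v d \<and> Nf *\<^sub>v v = 0\<^sub>v d)"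
      using det_0_iff_vec_prod_zero_field[OF Nfc] detNf by blast
    moreover have "v \<in> carrier_vec d" using dv by (rule carrier_vecI)
    ultimately have v0: "v = 0\<^sub>v d" by blast
    have cz: "c (bs ! i) = 0" if "i < d" for i
    proof -
      have "v $ i = 0" using v0 that by simp
      then show ?thesis using that by (simp add: v_def)
    qed
    show "\<forall>S\<in>Bset n. c S = 0"
    proof
      fix S assume "S \<in> Bset n"
      then obtain i where "i < d" "bs ! i = S" using bs(1) by (metis d_def in_set_conv_nth)
      then show "c S = 0" using cz by blast
    qed
  qed
qed




lemma ksub_pair: "T \<in> ksubsets n 2 \<Longrightarrow> \<exists>a b. a < b \<and> T = {a, b} \<and> 1 \<le> a \<and> b \<le> n"
proof -
  assume T: "T \<in> ksubsets n 2"
  then have "card T = 2" by (simp add: ksubsets_def)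
  then obtain a b where ab: "a < b" "T = {a, b}" using card2 by blast
  have "a \<in> {1..n}" "b \<in> {1..n}" using T ab(2) by (auto simp: ksubsets_def)
  then show ?thesis using ab by auto
qed

theorem mainTheorem4:
  fixes n :: nat and r :: "(nat set \<times> nat set) set" and G :: "nat set set"
  assumes "term_order n 2 r"
    and "\<And>a b a' b'. 1 \<le> a \<Longrightarrow> a < b \<Longrightarrow> b \<le> n \<Longrightarrow> 1 \<le> a' \<Longrightarrow> a' < b' \<Longrightarrow> b' \<le> n \<Longrightarrow>
           a + b < a' + b' \<Longrightarrow> ({a, b}, {a', b'}) \<in> r \<and> {a, b} \<noteq> {a', b'}"
    and "G \<subseteq> ksubsets n 2"
    and "\<And>T. T \<subseteq> {1..n} \<Longrightarrow> card T = 3 \<Longrightarrow> \<exists>e\<in>G. e \<subseteq> T"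
  shows "Bset n \<subseteq> ext_shift n 2 r G"
proof -
  have ri: "rows_indep 2 G (Bset n)" using rows_indep_B[OF assms(3) assms(4)] by blast
  have ol: "set (order_list n 2 r) = ksubsets n 2" "distinct (order_list n 2 r)"
    "sorted_wrt (\<lambda>S T. (S, T) \<in> r) (order_list n 2 r)"
    using order_list_props[OF assms(1)] by auto
  have anti: "antisym r" using assms(1)
    by (simp add: term_order_def linear_order_on_def partial_order_on_def)
  define xs where "xs = order_list n 2 r"
  define ys where "ys = takeWhile (\<lambda>S. S \<in> Bset n) xs"
  define zs where "zs = dropWhile (\<lambda>S. S \<in> Bset n) xs"
  have xsyz: "xs = ys @ zs" by (simp add: ys_def zs_def)
  have sys: "set ys = Bset n"
  proof
    show "set ys \<subseteq> Bset n" unfolding ys_def by (auto dest: set_takeWhileD)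
  next
    show "Bset n \<subseteq> set ys"
    proof
      fix S assume SB: "S \<in> Bset n"
      show "S \<in> set ys"
      proof (rule ccontr)
        assume nS: "S \<notin> set ys"
        have "S \<in> set xs" using SB Bset_sub ol(1) by (auto simp: xs_def)
        then have Sz: "S \<in> set zs" using nS xsyz by auto
        then obtain T zs' where zT: "zs = T # zs'" by (cases zs) auto
        have TnB: "T \<notin> Bset n" using zT unfolding zs_def
          by (metis hd_dropWhile list.sel(1) list.simps(3))
        have "T \<in> set xs" using zT xsyz by auto
        then have TK: "T \<in> ksubsets n 2" using ol(1) by (simp add: xs_def)
        have "S \<noteq> T" using SB TnB by auto
        then have "S \<in> set zs'" using Sz zT by auto
        moreover have "sorted_wrt (\<lambda>S T. (S, T) \<in> r) zs"
          using ol(3) xsyz by (simp add: xs_def sorted_wrt_append)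
        ultimately have TS: "(T, S) \<in> r" using zT by simp
        obtain a b where ab: "S = {a, b}" "1 \<le> a" "a < b" "b \<le> n" "a + b \<le> n"
          using SB unfolding Bset_def by blast
        obtain a' b' where ab': "a' < b'" "T = {a', b'}" "1 \<le> a'" "b' \<le> n"
          using ksub_pair[OF TK] by blast
        have "\<not> a' + b' \<le> n"
        proof
          assume "a' + b' \<le> n"
          then have "T \<in> Bset n" unfolding Bset_def using ab' by blast
          then show False using TnB by simp
        qed
        then have "a + b < a' + b'" using ab by simp
        then have "(S, T) \<in> r" "S \<noteq> T" using assms(2)[OF ab(2-4) ab'(3,1,4)] ab(1) ab'(2) by auto
        then show False using TS anti by (auto dest: antisymD)
      qed
    qed
  qed
  have "greedy 2 G ys {} = {} \<union> set ys"
    by (rule greedy_all) (use ri sys in auto)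
  then have "Bset n = greedy 2 G ys {}" using sys by simp
  also have "\<dots> \<subseteq> greedy 2 G zs (greedy 2 G ys {})" by (rule greedy_mono)
  also have "\<dots> = ext_shift n 2 r G"
    by (simp add: ext_shift_def xs_def[symmetric] xsyz greedy_append)
  finally show ?thesis .
qed


end
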